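(* Let $\mathcal{M}$ be a causal MDP and run C-UCBVI with confidence parameter $\delta>0$, both as described in the context. Let $\mathcal{E}$ be the event that $V_{k,h}(s)\ge V_h^*(s)$ for all episodes $k$, all steps $h\in[H]$ and all states $s\in\mathcal{S}$. Then $\Pr(\mathcal{E})\ge1-\delta$.
   Context: Causal MDP: finite state set $\mathcal{S}$ ($|\mathcal{S}|=S$), action set $\mathcal{A}$ (interventions), finite set $\mathcal{Z}$ ($|\mathcal{Z}|=Z$) of possible values of the parent variables. Unknown transitions $\mathbb{P}(s'\mid s,\mathbf{z})$, known conditional distributions $P(\mathbf{z}\mid s,a)$, known rewards $R(s,\mathbf{z})\in[0,1]$; $\mathbb{P}(s'\mid s,a)=\sum_{\mathbf{z}}\mathbb{P}(s'\mid s,\mathbf{z})P(\mathbf{z}\mid s,a)$, $R(s,a)=\sum_{\mathbf{z}}R(s,\mathbf{z})P(\mathbf{z}\mid s,a)$. Episodic interaction with horizon $H$, $K$ episodes, $T=KH$: in episode $k$ the initial state $s_{k,1}$ is arbitrary; at step $h$ the agent observes $s_{k,h}$, picks $a_{k,h}$, observes $\mathbf{z}_{k,h}\sim P(\cdot\mid s_{k,h},a_{k,h})$, and $s_{k,h+1}\sim\mathbb{P}(\cdot\mid s_{k,h},\mathbf{z}_{k,h})$. For a policy $\pi:\mathcal{S}\times[H]\to\mathcal{A}$, $V_h^\pi(s)=\mathbb{E}[\sum_{h'=h}^H R(s_{h'},\pi(s_{h'},h'))\mid s_h=s]$ and $V_h^*(s)=\sup_\pi V_h^\pi(s)$. C-UCBVI: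 before episode $k$, from all earlier tuples $(s,a,\mathbf{z},s')$, let $N_k(s,\mathbf{z},y)$ count tuples with state $s$, parent value $\mathbf{z}$, next state $y$; $N_k(s,\mathbf{z})=\sum_yN_k(s,\mathbf{z},y)$; $\hat{\mathbb{P}}_k(y\mid s,\mathbf{z})=N_k(s,\mathbf{z},y)/N_k(s,\mathbf{z})$ if $N_k(s,\mathbf{z})>0$. With $L=\log(5SHKZT/\delta)$, $b_{k,h}(s,\mathbf{z})=7HL\sqrt{S/N_k(s,\mathbf{z})}$. Set $V_{k,H+1}\equiv0$; for $h=H,\dots,1$: $q_{k,h}(s,\mathbf{z})=\min\{H,R(s,\mathbf{z})+\sum_y\hat{\mathbb{P}}_k(y\mid s,\mathbf{z})V_{k,h+1}(y)+b_{k,h}(s,\mathbf{z})\}$ if $N_k(s,\mathbf{z})>0$, else $H$; $Q_{k,h}(s,a)=\sum_{\mathbf{z}}P(\mathbf{z}\mid s,a)q_{k,h}(s,\mathbf{z})$; $V_{k,h}(s)=\max_aQ_{k,h}(s,a)$. The agent plays $a_{k,h}=\arg\max_aQ_{k,h}(s_{k,h},a)$. *)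

theory Defs
  imports "HOL-Probability.Probability"
begin

text \<open>Causal MDP with finite state type 's, finite action type 'a, finite parent-value
  type 'z.  Ptr s z : distribution of next state given (s,z) (unknown to the agent);
  Pz s a : known distribution of parent values; R s z : known reward in [0,1].\<close>

type_synonym ('s,'a,'z) tuple = "'s \<times> 'a \<times> 'z \<times> 's"

definition Rsa :: "('s \<Rightarrow> 'a \<Rightarrow> 'z::finite pmf) \<Rightarrow> ('s \<Rightarrow> 'z \<Rightarrow> real) \<Rightarrow> 's \<Rightarrow> 'a \<Rightarrow> real" where
  "Rsa Pz R s a = (\<Sum>z\<in>UNIV. R s z * pmf (Pz s a) z)"

definition Psa :: "('s \<Rightarrow> 'z \<Rightarrow> 's pmf) \<Rightarrow> ('s \<Rightarrow> 'a \<Rightarrow> 'z::finite pmf) \<Rightarrow> 's \<Rightarrow> 'a \<Rightarrow> 's \<Rightarrow> real" where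
  "Psa Ptr Pz s a s' = (\<Sum>z\<in>UNIV. pmf (Ptr s z) s' * pmf (Pz s a) z)"

text \<open>Vpol ... m s is V_h^pol(s) with h = H + 1 - m
  (m = number of remaining steps); Vpol ... 0 = V_{H+1} = 0.  The expectation of the
  cumulative reward is written in its (exact) backward-recursive form.\<close>

fun Vpol :: "('s::finite \<Rightarrow> 'z \<Rightarrow> 's pmf) \<Rightarrow> ('s \<Rightarrow> 'a \<Rightarrow> 'z::finite pmf) \<Rightarrow> ('s \<Rightarrow> 'z \<Rightarrow> real)
     \<Rightarrow> nat \<Rightarrow> ('s \<Rightarrow> nat \<Rightarrow> 'a) \<Rightarrow> nat \<Rightarrow> 's \<Rightarrow> real" where
  "Vpol Ptr Pz R H pol 0 s = 0"
| "Vpol Ptr Pz R H pol (Suc m) s =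
     (let h = H - m; a = pol s h in
        Rsa Pz R s a + (\<Sum>s'\<in>UNIV. Psa Ptr Pz s a s' * Vpol Ptr Pz R H pol m s'))"

definition Vpi where
  "Vpi Ptr Pz R H pol h s = Vpol Ptr Pz R H pol (H + 1 - h) s"

definition Vstar where
  "Vstar Ptr Pz R H h s = (SUP pol. Vpi Ptr Pz R H pol h s)"

definition Ncnt :: "('s,'a,'z) tuple list \<Rightarrow> 's \<Rightarrow> 'z \<Rightarrow> 's \<Rightarrow> nat" where
  "Ncnt D s z y = length (filter (\<lambda>(s0,a0,z0,s1). s0 = s \<and> z0 = z \<and> s1 = y) D)"

definition Nsz :: "('s::finite,'a,'z) tuple list \<Rightarrow> 's \<Rightarrow> 'z \<Rightarrow> nat" where
  "Nsz D s z = (\<Sum>y\<in>UNIV. Ncnt D s z y)"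

definition Phat :: "('s::finite,'a,'z) tuple list \<Rightarrow> 's \<Rightarrow> 'z \<Rightarrow> 's \<Rightarrow> real" where
  "Phat D s z y = real (Ncnt D s z y) / real (Nsz D s z)"

definition Lconst :: "'s::finite itself \<Rightarrow> 'z::finite itself \<Rightarrow> nat \<Rightarrow> nat \<Rightarrow> real \<Rightarrow> real" where
  "Lconst _ _ H K \<delta> =
     ln (real (CARD('s)) * real H * real K * real (CARD('z)) * real (K * H) * 5 / \<delta>)"

definition bonus :: "('s::finite,'a,'z::finite) tuple list \<Rightarrow> nat \<Rightarrow> nat \<Rightarrow> real \<Rightarrow> 's \<Rightarrow> 'z \<Rightarrow> real" where
  "bonus D H K \<delta> s z =
     7 * real H * Lconst TYPE('s) TYPE('z) H K \<delta> * sqrt (real (CARD('s)) / real (Nsz D s z))"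

text \<open>q_{k,h}(s,z) given V_{k,h+1} = V.\<close>
definition qval :: "('s::finite \<Rightarrow> 'z::finite \<Rightarrow> real) \<Rightarrow> nat \<Rightarrow> nat \<Rightarrow> real
     \<Rightarrow> ('s,'a,'z) tuple list \<Rightarrow> ('s \<Rightarrow> real) \<Rightarrow> 's \<Rightarrow> 'z \<Rightarrow> real" where
  "qval R H K \<delta> D V s z =
     (if Nsz D s z > 0
      then min (real H) (R s z + (\<Sum>y\<in>UNIV. Phat D s z y * V y) + bonus D H K \<delta> s z)
      else real H)"

text \<open>Optimistic values.  Vopt ... D m s is V_{k,h}(s) with h = H + 1 - m, D the data
  collected before episode k; Vopt ... D 0 = V_{k,H+1} = 0.\<close>
fun Vopt :: "('s::finite \<Rightarrow> 'a::finite \<Rightarrow> 'z::finite pmf) \<Rightarrow> ('s \<Rightarrow> 'z \<Rightarrow> real) \<Rightarrow> nat \<Rightarrow> nat \<Rightarrow> real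
     \<Rightarrow> ('s,'a,'z) tuple list \<Rightarrow> nat \<Rightarrow> 's \<Rightarrow> real" where
  "Vopt Pz R H K \<delta> D 0 s = 0"
| "Vopt Pz R H K \<delta> D (Suc m) s =
     Max (range (\<lambda>a. \<Sum>z\<in>UNIV. pmf (Pz s a) z * qval R H K \<delta> D (Vopt Pz R H K \<delta> D m) s z))"

definition Vk where
  "Vk Pz R H K \<delta> D h s = Vopt Pz R H K \<delta> D (H + 1 - h) s"

definition Qk where
  "Qk Pz R H K \<delta> D h s a =
     (\<Sum>z\<in>UNIV. pmf (Pz s a) z * qval R H K \<delta> D (Vk Pz R H K \<delta> D (h + 1)) s z)"

text \<open>One episode of C-UCBVI: n remaining steps, current step h, current state s;
  the action is chosen by sel, which returns a maximiser (arbitrary tie-breaking).\<close>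
fun episode :: "('s::finite \<Rightarrow> 'z \<Rightarrow> 's pmf) \<Rightarrow> ('s \<Rightarrow> 'a::finite \<Rightarrow> 'z::finite pmf) \<Rightarrow> ('s \<Rightarrow> 'z \<Rightarrow> real)
     \<Rightarrow> nat \<Rightarrow> nat \<Rightarrow> real \<Rightarrow> (('a \<Rightarrow> real) \<Rightarrow> 'a) \<Rightarrow> ('s,'a,'z) tuple list
     \<Rightarrow> nat \<Rightarrow> nat \<Rightarrow> 's \<Rightarrow> ('s,'a,'z) tuple list pmf" where
  "episode Ptr Pz R H K \<delta> sel D 0 h s = return_pmf []"
| "episode Ptr Pz R H K \<delta> sel D (Suc n) h s =
     (let a = sel (Qk Pz R H K \<delta> D h s) in
      do { z \<leftarrow> Pz s a;
           s' \<leftarrow> Ptr s z;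
           rest \<leftarrow> episode Ptr Pz R H K \<delta> sel D n (Suc h) s';
           return_pmf ((s, a, z, s') # rest) })"

text \<open>Distribution of all data after k episodes.  The initial state of each episode is
  arbitrary: chosen by init, possibly depending on all previously observed data.\<close>
fun run :: "('s::finite \<Rightarrow> 'z \<Rightarrow> 's pmf) \<Rightarrow> ('s \<Rightarrow> 'a::finite \<Rightarrow> 'z::finite pmf) \<Rightarrow> ('s \<Rightarrow> 'z \<Rightarrow> real)
     \<Rightarrow> nat \<Rightarrow> nat \<Rightarrow> real \<Rightarrow> (('a \<Rightarrow> real) \<Rightarrow> 'a) \<Rightarrow> (('s,'a,'z) tuple list \<Rightarrow> 's)
     \<Rightarrow> nat \<Rightarrow> ('s,'a,'z) tuple list pmf" where
  "run Ptr Pz R H K \<delta> sel init 0 = return_pmf []"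
| "run Ptr Pz R H K \<delta> sel init (Suc k) =
     do { D \<leftarrow> run Ptr Pz R H K \<delta> sel init k;
          ep \<leftarrow> episode Ptr Pz R H K \<delta> sel D H 1 (init D);
          return_pmf (D @ ep) }"

text \<open>The optimism event: V_{k,h}(s) >= V*_h(s) for all k in [K], h in [H], s, where the
  data before episode k is the first (k-1)H tuples of the full trajectory data.\<close>
definition optimism_event where
  "optimism_event Ptr Pz R H K \<delta> =
     {Dall. \<forall>k\<in>{1..K}. \<forall>h\<in>{1..H}. \<forall>s.
        Vk Pz R H K \<delta> (take ((k - 1) * H) Dall) h s \<ge> Vstar Ptr Pz R H h s}"

end

theory Submission
  imports Defs
begin


fun Wf :: "'s \<Rightarrow> 'z \<Rightarrow> ('s \<Rightarrow> real) \<Rightarrow> real \<Rightarrow> real \<Rightarrow> nat \<Rightarrow> nat \<Rightarrow> ('s,'a,'z) tuple list \<Rightarrow> ennreal" where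
  "Wf s0 z0 g th c n0 cnt [] = 1"
| "Wf s0 z0 g th c n0 cnt ((s,a,z,s')#xs) =
    (if s = s0 \<and> z = z0 \<and> cnt < n0 then ennreal (exp (th * g s' - c)) * Wf s0 z0 g th c n0 (Suc cnt) xs
     else Wf s0 z0 g th c n0 cnt xs)"

definition cntm :: "'s \<Rightarrow> 'z \<Rightarrow> ('s,'a,'z) tuple list \<Rightarrow> nat" where
  "cntm s0 z0 xs = length (filter (\<lambda>(s,a,z,s'). s = s0 \<and> z = z0) xs)"

definition gsum :: "'s \<Rightarrow> 'z \<Rightarrow> ('s \<Rightarrow> real) \<Rightarrow> ('s,'a,'z) tuple list \<Rightarrow> real" where
  "gsum s0 z0 g xs = sum_list (map (\<lambda>(s,a,z,s'). if s = s0 \<and> z = z0 then g s' else 0) xs)"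

lemma Wf_done: "n0 \<le> cnt \<Longrightarrow> Wf s0 z0 g th c n0 cnt xs = 1"
proof (induction xs arbitrary: cnt)
  case Nil then show ?case by simp
next
  case (Cons x xs)
  obtain s a z s' where x: "x = (s,a,z,s')" by (cases x) auto
  show ?case using Cons by (auto simp: x)
qed

lemma Wf_append:
  "Wf s0 z0 g th c n0 cnt (xs @ ys) = Wf s0 z0 g th c n0 cnt xs * Wf s0 z0 g th c n0 (cnt + cntm s0 z0 xs) ys"
proof (induction xs arbitrary: cnt)
  case Nil then show ?case by (simp add: cntm_def)
next
  case (Cons x xs)
  obtain s a z s' where x: "x = (s,a,z,s')" by (cases x) auto
  show ?case using Cons by (auto simp: x cntm_def mult.assoc Wf_done)
qed

lemma Wf_val: "cnt + cntm s0 z0 xs \<le> n0 \<Longrightarrow>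
   Wf s0 z0 g th c n0 cnt xs = ennreal (exp (th * gsum s0 z0 g xs - c * cntm s0 z0 xs))"
proof (induction xs arbitrary: cnt)
  case Nil then show ?case by (simp add: cntm_def gsum_def)
next
  case (Cons x xs)
  obtain s a z s' where x: "x = (s,a,z,s')" by (cases x) auto
  show ?case
  proof (cases "s = s0 \<and> z = z0")
    case True
    then have "Suc cnt + cntm s0 z0 xs \<le> n0" "cnt < n0" using Cons.prems by (auto simp: x cntm_def)
    then show ?thesis using Cons.IH[of "Suc cnt"] True
      by (auto simp: x cntm_def gsum_def algebra_simps simp flip: ennreal_mult exp_add)
  next
    case False
    then show ?thesis using Cons by (auto simp: x cntm_def gsum_def)
  qed
qed

lemma episode_super:
  fixes Ptr :: "'s::finite \<Rightarrow> 'z::finite \<Rightarrow> 's pmf" and Pz :: "'s \<Rightarrow> 'a::finite \<Rightarrow> 'z pmf"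
  assumes HL: "\<integral>\<^sup>+ y. ennreal (exp (th * g y - c)) \<partial>Ptr s0 z0 \<le> 1"
  shows "\<integral>\<^sup>+ ep. Wf s0 z0 g th c n0 cnt ep \<partial>(episode Ptr Pz R H K \<delta> sel D n h s) \<le> 1"
proof (induction n arbitrary: cnt h s)
  case 0 then show ?case by simp
next
  case (Suc n)
  define a where "a = sel (Qk Pz R H K \<delta> D h s)"
  have inner: "\<integral>\<^sup>+ s'. \<integral>\<^sup>+ rest. Wf s0 z0 g th c n0 cnt ((s,a,z,s')#rest) \<partial>episode Ptr Pz R H K \<delta> sel D n (Suc h) s' \<partial>Ptr s z \<le> 1" for z
  proof (cases "s = s0 \<and> z = z0 \<and> cnt < n0")
    case True
    have "\<integral>\<^sup>+ s'. \<integral>\<^sup>+ rest. Wf s0 z0 g th c n0 cnt ((s,a,z,s')#rest) \<partial>episode Ptr Pz R H K \<delta> sel D n (Suc h) s' \<partial>Ptr s z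
       = \<integral>\<^sup>+ s'. ennreal (exp (th * g s' - c)) * \<integral>\<^sup>+ rest. Wf s0 z0 g th c n0 (Suc cnt) rest \<partial>episode Ptr Pz R H K \<delta> sel D n (Suc h) s' \<partial>Ptr s z"
      using True by (simp add: nn_integral_cmult)
    also have "\<dots> \<le> \<integral>\<^sup>+ s'. ennreal (exp (th * g s' - c)) \<partial>Ptr s z"
      by (intro nn_integral_mono) (use Suc.IH in \<open>auto intro: mult_left_le\<close>)
    also have "\<dots> \<le> 1" using True HL by simp
    finally show ?thesis .
  next
    case False
    have "\<integral>\<^sup>+ s'. \<integral>\<^sup>+ rest. Wf s0 z0 g th c n0 cnt ((s,a,z,s')#rest) \<partial>episode Ptr Pz R H K \<delta> sel D n (Suc h) s' \<partial>Ptr s z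
       = \<integral>\<^sup>+ s'. \<integral>\<^sup>+ rest. Wf s0 z0 g th c n0 cnt rest \<partial>episode Ptr Pz R H K \<delta> sel D n (Suc h) s' \<partial>Ptr s z"
      by (intro nn_integral_cong) (use False in auto)
    also have "\<dots> \<le> \<integral>\<^sup>+ s'. 1 \<partial>Ptr s z"
      by (intro nn_integral_mono) (use Suc.IH in auto)
    also have "\<dots> = 1" by simp
    finally show ?thesis .
  qed
  have "\<integral>\<^sup>+ ep. Wf s0 z0 g th c n0 cnt ep \<partial>(episode Ptr Pz R H K \<delta> sel D (Suc n) h s)
     = \<integral>\<^sup>+ z. \<integral>\<^sup>+ s'. \<integral>\<^sup>+ rest. Wf s0 z0 g th c n0 cnt ((s,a,z,s')#rest) \<partial>episode Ptr Pz R H K \<delta> sel D n (Suc h) s' \<partial>Ptr s z \<partial>Pz s a"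
    by (simp add: a_def Let_def)
  also have "\<dots> \<le> \<integral>\<^sup>+ z. 1 \<partial>Pz s a"
    by (intro nn_integral_mono inner)
  also have "\<dots> = 1" by simp
  finally show ?case .
qed

lemma run_super:
  fixes Ptr :: "'s::finite \<Rightarrow> 'z::finite \<Rightarrow> 's pmf" and Pz :: "'s \<Rightarrow> 'a::finite \<Rightarrow> 'z pmf"
  assumes HL: "\<integral>\<^sup>+ y. ennreal (exp (th * g y - c)) \<partial>Ptr s0 z0 \<le> 1"
  shows "\<integral>\<^sup>+ D. Wf s0 z0 g th c n0 0 D \<partial>(run Ptr Pz R H K \<delta> sel init k) \<le> 1"
proof (induction k)
  case 0 then show ?case by simp
next
  case (Suc k)
  have "\<integral>\<^sup>+ D. Wf s0 z0 g th c n0 0 D \<partial>(run Ptr Pz R H K \<delta> sel init (Suc k))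
     = \<integral>\<^sup>+ D. Wf s0 z0 g th c n0 0 D * \<integral>\<^sup>+ ep. Wf s0 z0 g th c n0 (cntm s0 z0 D) ep
          \<partial>episode Ptr Pz R H K \<delta> sel D H 1 (init D) \<partial>run Ptr Pz R H K \<delta> sel init k"
    by (simp add: Wf_append nn_integral_cmult)
  also have "\<dots> \<le> \<integral>\<^sup>+ D. Wf s0 z0 g th c n0 0 D \<partial>run Ptr Pz R H K \<delta> sel init k"
    by (intro nn_integral_mono) (use episode_super[where th=th and g=g and c=c and Ptr=Ptr and ?s0.0=s0 and ?z0.0=z0, OF HL] in \<open>auto intro!: mult_left_le\<close>)
  also have "\<dots> \<le> 1" by (rule Suc.IH)
  finally show ?case .
qed



lemma hoeff_step:
  fixes p :: "'s::finite pmf" and f :: "'s \<Rightarrow> real"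
  assumes f: "\<And>y. 0 \<le> f y \<and> f y \<le> Hr" and th: "th > 0"
  shows "\<integral>\<^sup>+ y. ennreal (exp (th * ((\<Sum>x\<in>UNIV. pmf p x * f x) - f y) - th\<^sup>2 * Hr\<^sup>2 / 8)) \<partial>p \<le> 1"
proof -
  interpret X: interval_bounded_random_variable "measure_pmf p" "\<lambda>y. - f y" "-Hr" 0
    by unfold_locales (use f in auto)
  have E: "measure_pmf.expectation p (\<lambda>y. - f y) = - (\<Sum>x\<in>UNIV. pmf p x * f x)"
    by (subst integral_measure_pmf[where A=UNIV]) (auto simp: sum_negf)
  have E': "measure_pmf.expectation p f = (\<Sum>x\<in>UNIV. pmf p x * f x)"
    by (subst integral_measure_pmf[where A=UNIV]) auto
  have pt: "ennreal (exp (th * ((\<Sum>x\<in>UNIV. pmf p x * f x) - f y) - th\<^sup>2 * Hr\<^sup>2 / 8))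
     = ennreal (exp (- (th\<^sup>2 * Hr\<^sup>2 / 8))) * ennreal (exp (th * (- f y - measure_pmf.expectation p (\<lambda>y. - f y))))" for y
  proof -
    have "th * ((\<Sum>x\<in>UNIV. pmf p x * f x) - f y) - th\<^sup>2 * Hr\<^sup>2 / 8
        = - (th\<^sup>2 * Hr\<^sup>2 / 8) + th * (- f y - measure_pmf.expectation p (\<lambda>y. - f y))"
      unfolding E by (simp add: algebra_simps)
    then have "exp (th * ((\<Sum>x\<in>UNIV. pmf p x * f x) - f y) - th\<^sup>2 * Hr\<^sup>2 / 8)
        = exp (- (th\<^sup>2 * Hr\<^sup>2 / 8)) * exp (th * (- f y - measure_pmf.expectation p (\<lambda>y. - f y)))"
      by (simp only: exp_add)
    then show ?thesis by (simp only: ennreal_mult exp_ge_zero)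
  qed
  have "\<integral>\<^sup>+ y. ennreal (exp (th * ((\<Sum>x\<in>UNIV. pmf p x * f x) - f y) - th\<^sup>2 * Hr\<^sup>2 / 8)) \<partial>p
      = \<integral>\<^sup>+ y. ennreal (exp (- (th\<^sup>2 * Hr\<^sup>2 / 8))) * ennreal (exp (th * (- f y - measure_pmf.expectation p (\<lambda>y. - f y)))) \<partial>p"
    by (simp only: pt)
  also have "\<dots> = ennreal (exp (- (th\<^sup>2 * Hr\<^sup>2 / 8))) * \<integral>\<^sup>+ y. ennreal (exp (th * (- f y - measure_pmf.expectation p (\<lambda>y. - f y)))) \<partial>p"
    by (simp add: nn_integral_cmult)
  also have "\<dots> \<le> ennreal (exp (- (th\<^sup>2 * Hr\<^sup>2 / 8))) * ennreal (exp (th\<^sup>2 * (0 - - Hr)\<^sup>2 / 8))"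
    by (intro mult_left_mono X.Hoeffdings_lemma_nn_integral th) auto
  also have "\<dots> = 1" by (simp flip: ennreal_mult exp_add)
  finally show ?thesis .
qed

lemma sum_pmf_UNIV: "(\<Sum>x\<in>(UNIV::'a::finite set). pmf p x) = 1"
  by (rule sum_pmf_eq_1) auto

lemma pmf_avg_le:
  fixes p :: "'a::finite pmf"
  assumes "\<And>x. f x \<le> c"
  shows "(\<Sum>x\<in>UNIV. pmf p x * f x) \<le> c"
proof -
  have "(\<Sum>x\<in>UNIV. pmf p x * f x) \<le> (\<Sum>x\<in>UNIV. pmf p x * c)"
    by (intro sum_mono mult_left_mono assms) auto
  also have "\<dots> = c" by (simp flip: sum_distrib_right add: sum_pmf_UNIV)
  finally show ?thesis .
qed

lemma pmf_avg_ge: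
  fixes p :: "'a::finite pmf"
  assumes "\<And>x. c \<le> f x"
  shows "c \<le> (\<Sum>x\<in>UNIV. pmf p x * f x)"
proof -
  have "c = (\<Sum>x\<in>UNIV. pmf p x * c)" by (simp flip: sum_distrib_right add: sum_pmf_UNIV)
  also have "\<dots> \<le> (\<Sum>x\<in>UNIV. pmf p x * f x)"
    by (intro sum_mono mult_left_mono assms) auto
  finally show ?thesis .
qed

lemma Vpol_unfold:
  fixes Ptr :: "'s::finite \<Rightarrow> 'z::finite \<Rightarrow> 's pmf" and Pz :: "'s \<Rightarrow> 'a \<Rightarrow> 'z pmf"
  shows "Rsa Pz R s a + (\<Sum>s'\<in>UNIV. Psa Ptr Pz s a s' * V s')
     = (\<Sum>z\<in>UNIV. pmf (Pz s a) z * (R s z + (\<Sum>y\<in>UNIV. pmf (Ptr s z) y * V y)))"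
proof -
  have "(\<Sum>s'\<in>UNIV. Psa Ptr Pz s a s' * V s') = (\<Sum>s'\<in>UNIV. \<Sum>z\<in>UNIV. pmf (Pz s a) z * (pmf (Ptr s z) s' * V s'))"
    by (simp add: Psa_def sum_distrib_left sum_distrib_right mult_ac)
  also have "\<dots> = (\<Sum>z\<in>UNIV. pmf (Pz s a) z * (\<Sum>y\<in>UNIV. pmf (Ptr s z) y * V y))"
    by (subst sum.swap) (simp add: sum_distrib_left)
  finally show ?thesis by (simp add: Rsa_def algebra_simps sum.distrib)
qed

lemma Vpol_bounds:
  fixes Ptr :: "'s::finite \<Rightarrow> 'z::finite \<Rightarrow> 's pmf" and Pz :: "'s \<Rightarrow> 'a \<Rightarrow> 'z pmf"
  assumes R: "\<And>s z. 0 \<le> R s z \<and> R s z \<le> 1"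
  shows "0 \<le> Vpol Ptr Pz R H pol m s \<and> Vpol Ptr Pz R H pol m s \<le> real m"
proof (induction m arbitrary: s)
  case 0 then show ?case by simp
next
  case (Suc m)
  define a where "a = pol s (H - m)"
  have eq: "Vpol Ptr Pz R H pol (Suc m) s = (\<Sum>z\<in>UNIV. pmf (Pz s a) z * (R s z + (\<Sum>y\<in>UNIV. pmf (Ptr s z) y * Vpol Ptr Pz R H pol m y)))"
    by (simp add: a_def Let_def Vpol_unfold)
  have "\<And>z. 0 \<le> R s z + (\<Sum>y\<in>UNIV. pmf (Ptr s z) y * Vpol Ptr Pz R H pol m y)"
    using R Suc.IH by (intro add_nonneg_nonneg pmf_avg_ge) auto
  moreover have "\<And>z. R s z + (\<Sum>y\<in>UNIV. pmf (Ptr s z) y * Vpol Ptr Pz R H pol m y) \<le> real (Suc m)"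
  proof -
    fix z
    have "(\<Sum>y\<in>UNIV. pmf (Ptr s z) y * Vpol Ptr Pz R H pol m y) \<le> real m"
      using Suc.IH by (intro pmf_avg_le) auto
    then show "R s z + (\<Sum>y\<in>UNIV. pmf (Ptr s z) y * Vpol Ptr Pz R H pol m y) \<le> real (Suc m)"
      using R[of s z] by simp
  qed
  ultimately show ?case unfolding eq by (intro conjI pmf_avg_ge pmf_avg_le) auto
qed

definition Vs where "Vs Ptr Pz R H m s = (SUP pol. Vpol Ptr Pz R H pol m s)"

lemma Vs_bounds:
  fixes Ptr :: "'s::finite \<Rightarrow> 'z::finite \<Rightarrow> 's pmf" and Pz :: "'s \<Rightarrow> 'a \<Rightarrow> 'z pmf"
  assumes R: "\<And>s z. 0 \<le> R s z \<and> R s z \<le> 1"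
  shows "Vpol Ptr Pz R H pol m s \<le> Vs Ptr Pz R H m s" "0 \<le> Vs Ptr Pz R H m s" "Vs Ptr Pz R H m s \<le> real m"
proof -
  have bdd: "bdd_above (range (\<lambda>pol. Vpol Ptr Pz R H pol m s))"
  proof (intro bdd_aboveI[where M="real m"])
    fix x assume "x \<in> range (\<lambda>pol. Vpol Ptr Pz R H pol m s)"
    then obtain pol where "x = Vpol Ptr Pz R H pol m s" by auto
    then show "x \<le> real m" using Vpol_bounds[where R=R and Ptr=Ptr and Pz=Pz and H=H and pol=pol and m=m and s=s, OF R] by simp
  qed
  show 1: "Vpol Ptr Pz R H pol m s \<le> Vs Ptr Pz R H m s"
    unfolding Vs_def by (rule cSUP_upper[OF _ bdd]) auto
  show "0 \<le> Vs Ptr Pz R H m s" using 1 Vpol_bounds[where R=R and Ptr=Ptr and Pz=Pz and H=H and pol=pol and m=m and s=s, OF R] by linarith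
  show "Vs Ptr Pz R H m s \<le> real m"
    unfolding Vs_def by (rule cSUP_least) (auto intro: Vpol_bounds[where R=R, OF R, THEN conjunct2])
qed

lemma Vs_Suc_le:
  fixes Ptr :: "'s::finite \<Rightarrow> 'z::finite \<Rightarrow> 's pmf" and Pz :: "'s \<Rightarrow> 'a::finite \<Rightarrow> 'z pmf"
  assumes R: "\<And>s z. 0 \<le> R s z \<and> R s z \<le> 1"
    and Q: "\<And>z. R s z + (\<Sum>y\<in>UNIV. pmf (Ptr s z) y * Vs Ptr Pz R H m y) \<le> Qz z"
  shows "Vs Ptr Pz R H (Suc m) s \<le> Max (range (\<lambda>a. \<Sum>z\<in>UNIV. pmf (Pz s a) z * Qz z))"
  unfolding Vs_def
proof (rule cSUP_least)
  fix pol :: "'s \<Rightarrow> nat \<Rightarrow> 'a"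
  define a where "a = pol s (H - m)"
  have "Vpol Ptr Pz R H pol (Suc m) s = (\<Sum>z\<in>UNIV. pmf (Pz s a) z * (R s z + (\<Sum>y\<in>UNIV. pmf (Ptr s z) y * Vpol Ptr Pz R H pol m y)))"
    by (simp add: a_def Let_def Vpol_unfold)
  also have "\<dots> \<le> (\<Sum>z\<in>UNIV. pmf (Pz s a) z * Qz z)"
  proof (intro sum_mono mult_left_mono)
    fix z
    have "(\<Sum>y\<in>UNIV. pmf (Ptr s z) y * Vpol Ptr Pz R H pol m y) \<le> (\<Sum>y\<in>UNIV. pmf (Ptr s z) y * Vs Ptr Pz R H m y)"
      by (intro sum_mono mult_left_mono Vs_bounds(1)[where R=R, OF R]) auto
    then show "R s z + (\<Sum>y\<in>UNIV. pmf (Ptr s z) y * Vpol Ptr Pz R H pol m y) \<le> Qz z"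
      using Q[of z] by linarith
  qed auto
  also have "\<dots> \<le> Max (range (\<lambda>a. \<Sum>z\<in>UNIV. pmf (Pz s a) z * Qz z))"
    by (rule Max_ge) auto
  finally show "Vpol Ptr Pz R H pol (Suc m) s \<le> Max (range (\<lambda>a. \<Sum>z\<in>UNIV. pmf (Pz s a) z * Qz z))" .
qed auto

definition Good where
  "Good Ptr Pz R H K \<delta> D \<longleftrightarrow> (\<forall>s z m. m < H \<longrightarrow> 0 < Nsz D s z \<longrightarrow>
     (\<Sum>y\<in>UNIV. pmf (Ptr s z) y * Vs Ptr Pz R H m y) \<le> (\<Sum>y\<in>UNIV. Phat D s z y * Vs Ptr Pz R H m y) + bonus D H K \<delta> s z)"

lemma Good_opt:
  fixes Ptr :: "'s::finite \<Rightarrow> 'z::finite \<Rightarrow> 's pmf" and Pz :: "'s \<Rightarrow> 'a::finite \<Rightarrow> 'z pmf"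
    and D :: "('s,'a,'z) tuple list"
  assumes R: "\<And>s z. 0 \<le> R s z \<and> R s z \<le> 1" and G: "Good Ptr Pz R H K \<delta> D"
  shows "m \<le> H \<Longrightarrow> Vs Ptr Pz R H m s \<le> Vopt Pz R H K \<delta> D m s"
proof (induction m arbitrary: s)
  case 0 then show ?case by (simp add: Vs_def)
next
  case (Suc m)
  have mH: "m < H" using Suc.prems by simp
  show ?case unfolding Vopt.simps
  proof (rule Vs_Suc_le[where R=R, OF R])
    fix z
    let ?V = "Vs Ptr Pz R H m"
    have avg: "(\<Sum>y\<in>UNIV. pmf (Ptr s z) y * ?V y) \<le> real m"
      by (intro pmf_avg_le Vs_bounds(3)[where R=R, OF R])
    have le1: "R s z + (\<Sum>y\<in>UNIV. pmf (Ptr s z) y * ?V y) \<le> real H"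
      using avg R[of s z] mH by linarith
    show "R s z + (\<Sum>y\<in>UNIV. pmf (Ptr s z) y * ?V y) \<le> qval R H K \<delta> D (Vopt Pz R H K \<delta> D m) s z"
    proof (cases "Nsz D s z > 0")
      case True
      have "(\<Sum>y\<in>UNIV. Phat D s z y * ?V y) \<le> (\<Sum>y\<in>UNIV. Phat D s z y * Vopt Pz R H K \<delta> D m y)"
        using Suc.IH mH by (intro sum_mono mult_left_mono) (auto simp: Phat_def)
      moreover have "(\<Sum>y\<in>UNIV. pmf (Ptr s z) y * ?V y) \<le> (\<Sum>y\<in>UNIV. Phat D s z y * ?V y) + bonus D H K \<delta> s z"
        using G mH True unfolding Good_def by blast
      ultimately show ?thesis using True le1 unfolding qval_def by simp
    qed (use le1 in \<open>simp add: qval_def\<close>)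
  qed
qed



lemma sum_Ncnt:
  fixes D :: "('s::finite,'a,'z) tuple list"
  shows "(\<Sum>y\<in>UNIV. real (Ncnt D s z y) * f y) = gsum s z f D"
proof (induction D)
  case Nil then show ?case by (simp add: Ncnt_def gsum_def)
next
  case (Cons x D)
  obtain s1 a1 z1 y1 where x: "x = (s1,a1,z1,y1)" by (cases x) auto
  have "(\<Sum>y\<in>UNIV. real (Ncnt (x#D) s z y) * f y)
      = (\<Sum>y\<in>UNIV. (if s1 = s \<and> z1 = z \<and> y1 = y then f y else 0)) + (\<Sum>y\<in>UNIV. real (Ncnt D s z y) * f y)"
    by (auto simp: x Ncnt_def sum.distrib[symmetric] distrib_right intro!: sum.cong)
  also have "(\<Sum>y\<in>UNIV. (if s1 = s \<and> z1 = z \<and> y1 = y then f y else 0)) = (if s1 = s \<and> z1 = z then f y1 else 0)"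
    by (auto simp: sum.delta)
  finally show ?case using Cons by (simp add: x gsum_def)
qed

lemma Nsz_cntm:
  fixes D :: "('s::finite,'a,'z) tuple list"
  shows "Nsz D s z = cntm s z D"
proof (induction D)
  case Nil then show ?case by (simp add: Nsz_def Ncnt_def cntm_def)
next
  case (Cons x D)
  obtain s1 a1 z1 y1 where x: "x = (s1,a1,z1,y1)" by (cases x) auto
  have "Nsz (x#D) s z = (\<Sum>y\<in>UNIV. (if s1 = s \<and> z1 = z \<and> y1 = y then 1 else 0)) + Nsz D s z"
    by (auto simp: x Nsz_def Ncnt_def sum.distrib[symmetric] intro!: sum.cong)
  also have "(\<Sum>y\<in>UNIV. (if s1 = s \<and> z1 = z \<and> y1 = y then 1 else 0::nat)) = (if s1 = s \<and> z1 = z then 1 else 0)"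
    by (auto simp: sum.delta)
  finally show ?case using Cons by (simp add: x cntm_def)
qed

lemma gsum_lin: "gsum s z (\<lambda>y. mu - f y) D = mu * real (cntm s z D) - gsum s z f D"
proof (induction D)
  case Nil then show ?case by (simp add: gsum_def cntm_def)
next
  case (Cons x D)
  obtain s1 a1 z1 y1 where x: "x = (s1,a1,z1,y1)" by (cases x) auto
  show ?case using Cons by (simp add: x gsum_def cntm_def algebra_simps)
qed

lemma cntm_le: "cntm s z D \<le> length D"
  by (simp add: cntm_def)



lemma alg:
  fixes Hr L Sr n :: real
  assumes "Hr > 0" "n > 0" "Sr \<ge> 0"
  shows "n * ((4 * (7*Hr*L * sqrt(Sr/n)) / Hr\<^sup>2) * (7*Hr*L * sqrt(Sr/n))
           - (4 * (7*Hr*L * sqrt(Sr/n)) / Hr\<^sup>2)\<^sup>2 * Hr\<^sup>2 / 8) = 98 * L\<^sup>2 * Sr"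
proof -
  have sq: "(sqrt (Sr/n))\<^sup>2 = Sr/n" using assms by simp
  have "n * ((4 * (7*Hr*L * sqrt(Sr/n)) / Hr\<^sup>2) * (7*Hr*L * sqrt(Sr/n))
           - (4 * (7*Hr*L * sqrt(Sr/n)) / Hr\<^sup>2)\<^sup>2 * Hr\<^sup>2 / 8) = n * 98 * L\<^sup>2 * (sqrt (Sr/n))\<^sup>2"
    using assms by (simp add: field_simps power2_eq_square)
  also have "\<dots> = 98 * L\<^sup>2 * Sr" using assms by (simp add: sq)
  finally show ?thesis .
qed

lemma markov_pmf:
  fixes M :: "'x pmf"
  assumes W: "\<integral>\<^sup>+ x. W x \<partial>M \<le> 1" and A: "A > 0"
  shows "measure_pmf.prob M {x. ennreal A \<le> W x} \<le> 1 / A"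
proof -
  let ?B = "{x. ennreal A \<le> W x}"
  have "ennreal A * emeasure M ?B = \<integral>\<^sup>+ x. ennreal A * indicator ?B x \<partial>M"
    by (simp add: nn_integral_cmult_indicator)
  also have "\<dots> \<le> \<integral>\<^sup>+ x. W x \<partial>M"
    by (intro nn_integral_mono) (auto split: split_indicator)
  also have "\<dots> \<le> 1" by (rule W)
  finally have "ennreal (A * measure_pmf.prob M ?B) \<le> 1"
    using A by (simp add: measure_pmf.emeasure_eq_measure ennreal_mult)
  then have "A * measure_pmf.prob M ?B \<le> 1"
    by (simp add: ennreal_le_1)
  then show ?thesis using A by (simp add: field_simps)
qed



theorem lemma1:
  fixes Ptr :: "'s::finite \<Rightarrow> 'z::finite \<Rightarrow> 's pmf"
    and Pz :: "'s \<Rightarrow> 'a::finite \<Rightarrow> 'z pmf"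
    and R :: "'s \<Rightarrow> 'z \<Rightarrow> real"
    and H K :: nat and \<delta> :: real
    and sel :: "('a \<Rightarrow> real) \<Rightarrow> 'a"
    and init :: "('s,'a,'z) tuple list \<Rightarrow> 's"
  assumes "\<And>s z. 0 \<le> R s z \<and> R s z \<le> 1"
    and "\<delta> > 0"
    and "\<And>f a. f a \<le> f (sel f)"
  shows "measure_pmf.prob (run Ptr Pz R H K \<delta> sel init K) (optimism_event Ptr Pz R H K \<delta>)
           \<ge> 1 - \<delta>"
proof -
  note R = assms(1)
  let ?M = "run Ptr Pz R H K \<delta> sel init K"
  let ?E = "optimism_event Ptr Pz R H K \<delta>"
  consider "\<delta> \<ge> 1" | "H = 0 \<or> K = 0" | "\<delta> < 1" "H > 0" "K > 0" by linarith
  then show ?thesis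
  proof cases
    case 1 then show ?thesis by (smt (verit) measure_nonneg)
  next
    case 2
    then have "?E = UNIV" by (auto simp: optimism_event_def)
    then show ?thesis using assms(2) by simp
  next
    case 3
    define S where "S = CARD('s)"
    define Zc where "Zc = CARD('z)"
    define L where "L = Lconst TYPE('s) TYPE('z) H K \<delta>"
    define I where "I = (UNIV :: 's set) \<times> (UNIV :: 'z set) \<times> {..<H} \<times> {1..K*H}"
    define A where "A = real (card I) / \<delta>"
    define fF where "fF m = Vs Ptr Pz R H m" for m
    define muF where "muF s0 z0 m = (\<Sum>x\<in>UNIV. pmf (Ptr s0 z0) x * fF m x)" for s0 z0 m
    define bF where "bF n0 = 7 * real H * L * sqrt (real S / real n0)" for n0 :: nat
    define thF where "thF n0 = 4 * bF n0 / (real H)\<^sup>2" for n0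
    define cF where "cF n0 = (thF n0)\<^sup>2 * (real H)\<^sup>2 / 8" for n0
    define Bad where "Bad i = (case i of (s0,z0,m,n0) \<Rightarrow>
       {D :: ('s,'a,'z) tuple list. ennreal A \<le> Wf s0 z0 (\<lambda>y. muF s0 z0 m - fF m y) (thF n0) (cF n0) n0 0 D})" for i
    have Spos: "S > 0" "Zc > 0" by (auto simp: S_def Zc_def)
    have cardI: "card I = S * Zc * H * (K * H)"
      by (simp add: I_def card_cartesian_product S_def Zc_def)
    have cardpos: "card I > 0" using cardI Spos 3 by simp
    have Apos: "A > 0" using cardpos assms(2) by (simp add: A_def)
    have expL: "exp L = 5 * real K * A"
    proof -
      have "real S * real H * real K * real Zc * real (K * H) * 5 / \<delta> > 0"
        using Spos 3 assms(2) by simp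
      then show ?thesis
        by (simp add: L_def Lconst_def A_def cardI S_def Zc_def)
    qed
    have L1: "L \<ge> 1"
    proof -
      have "exp 1 \<le> (3::real)" by (rule exp_le)
      also have "3 \<le> 5 * real K * A"
      proof -
        have "A \<ge> 1" using cardpos assms(2) 3 by (simp add: A_def)
        moreover have "real K \<ge> 1" using 3 by simp
        ultimately have "real K * A \<ge> 1 * 1" by (intro mult_mono) auto
        then show ?thesis by simp
      qed
      finally have "exp 1 \<le> exp L" using expL by simp
      then show ?thesis by simp
    qed
    have Lpos: "L > 0" using L1 by simp
    have badprob: "measure_pmf.prob ?M (Bad i) \<le> \<delta> / real (card I)" if i: "i \<in> I" for i
    proof -
      obtain s0 z0 m n0 where ieq: "i = (s0,z0,m,n0)" by (cases i) auto
      have mH: "m < H" and n0: "n0 \<ge> 1" using i by (auto simp: I_def ieq)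
      have thpos: "thF n0 > 0" using 3 n0 Lpos Spos by (simp add: thF_def bF_def)
      have fb: "0 \<le> fF m y \<and> fF m y \<le> real H" for y
        using Vs_bounds(2,3)[where R=R, OF R, of Ptr Pz H m y] mH by (simp add: fF_def)
      have HL: "\<integral>\<^sup>+ y. ennreal (exp (thF n0 * (muF s0 z0 m - fF m y) - cF n0)) \<partial>Ptr s0 z0 \<le> 1"
        using hoeff_step[OF fb thpos, of "Ptr s0 z0"] by (simp add: muF_def cF_def)
      have "measure_pmf.prob ?M (Bad i) \<le> 1 / A"
        unfolding Bad_def ieq prod.case
        by (rule markov_pmf[OF run_super Apos]) (use HL in simp)
      then show ?thesis by (simp add: A_def)
    qed
    have cover: "UNIV - ?E \<subseteq> (\<Union>i\<in>I. Bad i)"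
    proof
      fix Dall assume "Dall \<in> UNIV - ?E"
      then obtain k h s where k: "k \<in> {1..K}" and h: "h \<in> {1..H}"
        and lt: "\<not> Vstar Ptr Pz R H h s \<le> Vk Pz R H K \<delta> (take ((k - 1) * H) Dall) h s"
        by (auto simp: optimism_event_def)
      define D where "D = take ((k - 1) * H) Dall"
      have "\<not> Good Ptr Pz R H K \<delta> D"
      proof
        assume G: "Good Ptr Pz R H K \<delta> D"
        have "Vs Ptr Pz R H (H + 1 - h) s \<le> Vopt Pz R H K \<delta> D (H + 1 - h) s"
          by (rule Good_opt[OF R G]) (use h in force)
        then show False using lt by (simp add: D_def Vk_def Vstar_def Vpi_def Vs_def)
      qed
      then obtain s0 z0 m where mH: "m < H" and Npos: "0 < Nsz D s0 z0"
        and bad: "(\<Sum>y\<in>UNIV. Phat D s0 z0 y * fF m y) + bonus D H K \<delta> s0 z0 < muF s0 z0 m"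
        unfolding Good_def fF_def muF_def by (meson not_le)
      define n0 where "n0 = Nsz D s0 z0"
      have n0c: "n0 = cntm s0 z0 D" by (simp add: n0_def Nsz_cntm)
      have n0le: "n0 \<le> K * H"
      proof -
        have "n0 \<le> length D" using n0c cntm_le by simp
        also have "\<dots> \<le> (k - 1) * H" by (simp add: D_def)
        also have "\<dots> \<le> K * H" using k by (intro mult_le_mono1) auto
        finally show ?thesis .
      qed
      have iI: "(s0, z0, m, n0) \<in> I" using mH Npos n0le by (auto simp: I_def n0_def)
      define F where "F = gsum s0 z0 (fF m) D"
      have avg: "(\<Sum>y\<in>UNIV. Phat D s0 z0 y * fF m y) = F / real n0"
        by (simp add: Phat_def F_def n0_def sum_divide_distrib[symmetric] sum_Ncnt[symmetric])
      have bon: "bonus D H K \<delta> s0 z0 = bF n0"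
        by (simp add: bonus_def bF_def n0_def L_def S_def)
      have n0pos: "real n0 > 0" using Npos by (simp add: n0_def)
      have gap: "real n0 * bF n0 < real n0 * muF s0 z0 m - F"
      proof -
        have "F / real n0 + bF n0 < muF s0 z0 m" using bad avg bon by simp
        then have "real n0 * (F / real n0 + bF n0) < real n0 * muF s0 z0 m"
          using n0pos by (simp add: mult_strict_left_mono)
        moreover have "real n0 * (F / real n0 + bF n0) = F + real n0 * bF n0"
          using n0pos by (simp add: field_simps)
        ultimately show ?thesis by linarith
      qed
      let ?g = "\<lambda>y. muF s0 z0 m - fF m y"
      have gs: "gsum s0 z0 ?g D = real n0 * muF s0 z0 m - F"
        by (simp add: gsum_lin F_def n0c)
      have thpos: "thF n0 > 0" using 3 n0pos Lpos Spos by (simp add: thF_def bF_def)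
      have "Wf s0 z0 ?g (thF n0) (cF n0) n0 0 Dall
           = Wf s0 z0 ?g (thF n0) (cF n0) n0 0 (D @ drop ((k - 1) * H) Dall)"
        by (simp add: D_def)
      also have "\<dots> = Wf s0 z0 ?g (thF n0) (cF n0) n0 0 D"
        by (simp add: Wf_append Wf_done n0c)
      also have "\<dots> = ennreal (exp (thF n0 * gsum s0 z0 ?g D - cF n0 * real n0))"
        by (simp add: Wf_val n0c)
      finally have Weq: "Wf s0 z0 ?g (thF n0) (cF n0) n0 0 Dall = ennreal (exp (thF n0 * gsum s0 z0 ?g D - cF n0 * real n0))" .
      have "real n0 * (thF n0 * bF n0 - cF n0) = 98 * L\<^sup>2 * real S"
        unfolding thF_def cF_def bF_def by (rule alg) (use 3 n0pos in auto)
      moreover have "thF n0 * (real n0 * bF n0) \<le> thF n0 * gsum s0 z0 ?g D"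
        using gap gs thpos by (simp add: mult_left_mono)
      ultimately have "98 * L\<^sup>2 * real S \<le> thF n0 * gsum s0 z0 ?g D - cF n0 * real n0"
        by (simp add: algebra_simps)
      moreover have "L \<le> 98 * L\<^sup>2 * real S"
      proof -
        have "L \<le> L * L" using L1 by (simp add: mult_le_cancel_left1)
        also have "\<dots> \<le> 98 * L\<^sup>2 * real S"
        proof -
          have s1: "1 \<le> real S" using Spos by simp
          have "L * L * 1 \<le> L * L * real S" by (intro mult_left_mono s1) simp
          moreover have "0 \<le> L * L * real S" by simp
          ultimately show ?thesis unfolding power2_eq_square by linarith
        qed
        finally show ?thesis .
      qed
      ultimately have "L \<le> thF n0 * gsum s0 z0 ?g D - cF n0 * real n0" by linarith
      then have "exp L \<le> exp (thF n0 * gsum s0 z0 ?g D - cF n0 * real n0)" by simp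
      moreover have "A \<le> exp L" using expL Apos 3 by simp
      ultimately have "A \<le> exp (thF n0 * gsum s0 z0 ?g D - cF n0 * real n0)" by linarith
      then have "Dall \<in> Bad (s0, z0, m, n0)" by (simp add: Bad_def Weq)
      then show "Dall \<in> (\<Union>i\<in>I. Bad i)" using iI by blast
    qed
    have "measure_pmf.prob ?M (UNIV - ?E) \<le> measure_pmf.prob ?M (\<Union>i\<in>I. Bad i)"
      by (rule measure_pmf.finite_measure_mono[OF cover]) simp
    also have "\<dots> \<le> (\<Sum>i\<in>I. measure_pmf.prob ?M (Bad i))"
      by (rule measure_pmf.finite_measure_subadditive_finite) (auto simp: I_def)
    also have "\<dots> \<le> (\<Sum>i\<in>I. \<delta> / real (card I))"
      by (rule sum_mono) (rule badprob)
    also have "\<dots> = \<delta>" using cardpos by simp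
    finally have "measure_pmf.prob ?M (UNIV - ?E) \<le> \<delta>" .
    moreover have "measure_pmf.prob ?M (UNIV - ?E) = 1 - measure_pmf.prob ?M ?E"
      using measure_pmf.prob_compl[of ?E ?M] by simp
    ultimately show ?thesis by simp
  qed
qed

end
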